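(* Let $f\colon\mathbb{N}\to\mathbb{N}$ be a growth function, $d$ a positive integer, and $\psi=\psi_{d,f}$. If $(N_1,\dots,N_d),(M_1,\dots,M_d)\in\mathbb{N}^d$ satisfy $\sum_iN_i\le\sum_iM_i$ and $(N_1,\dots,N_d)\le(M_1,\dots,M_d)$ in the inverse lexicographic order, then $\psi(N_1,\dots,N_d)\le\psi(M_1,\dots,M_d)$.
   Context: A growth function is a non-decreasing $f\colon\mathbb{N}\to\mathbb{N}$ with $f(r)\ge r$ for all $r$ ($\mathbb{N}$ includes $0$). Inverse lexicographic order on $\mathbb{N}^d$: $\vec N<\vec M$ if at the largest index $j$ with $N_j\ne M_j$ one has $N_j<M_j$. $\psi_{d,f}\colon\mathbb{N}^d\to\mathbb{N}$ is defined recursively: $\psi_{d,f}(M_1,0,\dots,0)=M_1$; otherwise, if $\ell\ge2$ is the smallest index with $M_\ell>0$, $\psi_{d,f}(M_1,\dots,M_d)=\psi_{d,f}(M_1,\dots,M_{\ell-1}+f(\sum_iM_i),M_\ell-1,M_{\ell+1},\dots,M_d)$. *)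

theory Defs
  imports Main
begin

(* Vectors (M_1,...,M_d) in N^d are represented as lists M of length d,
   with M_i = M ! (i - 1) (0-based list indices). *)

definition growth_function :: "(nat \<Rightarrow> nat) \<Rightarrow> bool" where
  "growth_function f \<longleftrightarrow> mono f \<and> (\<forall>r. f r \<ge> r)"

definition invlex_less :: "nat list \<Rightarrow> nat list \<Rightarrow> bool" where
  "invlex_less N M \<longleftrightarrow> length N = length M \<and>
     (\<exists>j < length M. N ! j < M ! j \<and> (\<forall>k. j < k \<and> k < length M \<longrightarrow> N ! k = M ! k))"

definition invlex_le :: "nat list \<Rightarrow> nat list \<Rightarrow> bool" where
  "invlex_le N M \<longleftrightarrow> N = M \<or> invlex_less N M"

definition first_pos :: "nat list \<Rightarrow> nat" where
  "first_pos M = (LEAST l. 1 \<le> l \<and> l < length M \<and> 0 < M ! l)"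

definition psi_step :: "(nat \<Rightarrow> nat) \<Rightarrow> nat list \<Rightarrow> nat list" where
  "psi_step f M = (let l = first_pos M in
      M[l - 1 := M ! (l - 1) + f (sum_list M), l := M ! l - 1])"

lemma psi_step_decreases:
  assumes "\<not> (\<forall>i. 1 \<le> i \<and> i < length M \<longrightarrow> M ! i = 0)"
  shows "(rev (psi_step f M), rev M) \<in> lex less_than"
proof -
  define l where "l = first_pos M"
  have ex: "\<exists>l. 1 \<le> l \<and> l < length M \<and> 0 < M ! l" using assms by auto
  have P: "1 \<le> l \<and> l < length M \<and> 0 < M ! l"
    unfolding l_def first_pos_def by (rule LeastI_ex[OF ex])
  define M' where "M' = psi_step f M"
  have M': "M' = M[l - 1 := M ! (l - 1) + f (sum_list M), l := M ! l - 1]"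
    unfolding M'_def psi_step_def l_def Let_def by simp
  have len: "length M' = length M" using M' by simp
  have lt: "M' ! l < M ! l" using M' P by simp
  have dr: "drop (Suc l) M' = drop (Suc l) M"
    using M' P by (simp add: drop_update_cancel)
  have dM: "M = take l M @ M ! l # drop (Suc l) M" using P by (simp add: id_take_nth_drop)
  have dM': "M' = take l M' @ M' ! l # drop (Suc l) M'" using P len by (simp add: id_take_nth_drop)
  have "rev M = rev (drop (Suc l) M) @ M ! l # rev (take l M)"
    by (subst dM) simp
  moreover have "rev M' = rev (drop (Suc l) M) @ M' ! l # rev (take l M')"
    by (subst dM') (simp add: dr)
  ultimately show ?thesis
    unfolding M'_def[symmetric] using lt len
    by (auto simp: lex_conv intro!: exI[of _ "rev (drop (Suc l) M)"])
qed

function psi :: "(nat \<Rightarrow> nat) \<Rightarrow> nat list \<Rightarrow> nat" where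
  "psi f M = (if (\<forall>i. 1 \<le> i \<and> i < length M \<longrightarrow> M ! i = 0) then M ! 0
                else psi f (psi_step f M))"
  by auto
termination
  by (relation "inv_image (lex less_than) (\<lambda>(f, M). rev M)")
     (auto intro: psi_step_decreases)

end

theory Submission
  imports Defs
begin

definition terminal :: "nat list \<Rightarrow> bool" where
  "terminal M \<longleftrightarrow> (\<forall>i. 1 \<le> i \<and> i < length M \<longrightarrow> M ! i = 0)"

declare psi.simps[simp del]

lemma psi_term: "terminal M \<Longrightarrow> psi f M = M ! 0"
  unfolding terminal_def by (subst psi.simps) simp

lemma psi_nterm: "\<not> terminal M \<Longrightarrow> psi f M = psi f (psi_step f M)"
  unfolding terminal_def by (subst psi.simps) auto


lemma fp_props:
  assumes "\<not> terminal M"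
  shows "1 \<le> first_pos M" "first_pos M < length M" "0 < M ! first_pos M"
    "\<And>i. 1 \<le> i \<Longrightarrow> i < first_pos M \<Longrightarrow> M ! i = 0"
proof -
  have ex: "\<exists>l. 1 \<le> l \<and> l < length M \<and> 0 < M ! l" using assms unfolding terminal_def by auto
  have P: "1 \<le> first_pos M \<and> first_pos M < length M \<and> 0 < M ! first_pos M"
    unfolding first_pos_def by (rule LeastI_ex[OF ex])
  then show "1 \<le> first_pos M" "first_pos M < length M" "0 < M ! first_pos M" by auto
  fix i assume "1 \<le> i" "i < first_pos M"
  then show "M ! i = 0" using P not_less_Least[of i "\<lambda>l. 1 \<le> l \<and> l < length M \<and> 0 < M ! l"]
    unfolding first_pos_def by auto
qed

lemma fp_le: "1 \<le> i \<Longrightarrow> i < length M \<Longrightarrow> 0 < M ! i \<Longrightarrow> first_pos M \<le> i"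
  unfolding first_pos_def by (rule Least_le) auto

lemma step_len[simp]: "length (psi_step f M) = length M"
  unfolding psi_step_def Let_def by simp

lemma step_nth:
  assumes "\<not> terminal M" "i < length M"
  shows "psi_step f M ! i = (if i = first_pos M - 1 then M ! (first_pos M - 1) + f (sum_list M)
     else if i = first_pos M then M ! first_pos M - 1 else M ! i)"
  using fp_props[OF assms(1)] assms(2) unfolding psi_step_def Let_def
  by (auto simp: nth_list_update)

lemma two_le_sum:
  fixes N :: "nat list"
  assumes "p \<noteq> q" "p < length N" "q < length N"
  shows "N ! p + N ! q \<le> sum_list N"
proof -
  have "N ! p + N ! q = (\<Sum>i\<in>{p,q}. N ! i)" using assms by simp
  also have "\<dots> \<le> (\<Sum>i = 0..<length N. N ! i)"
    by (rule sum_mono2) (use assms in auto)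
  finally show ?thesis by (simp add: sum_list_sum_nth)
qed

lemma step_sum:
  assumes "growth_function f" "\<not> terminal M"
  shows "sum_list (psi_step f M) = sum_list M + f (sum_list M) - 1"
proof -
  note F = fp_props[OF assms(2)]
  define l where "l = first_pos M"
  define S where "S = sum_list M"
  have "M ! l \<le> S" using F unfolding l_def S_def by (simp add: elem_le_sum_list)
  have "f S \<ge> S" using assms(1) unfolding growth_function_def by auto
  have l1: "l - 1 < length M" "l < length M" "l - 1 \<noteq> l" using F unfolding l_def by auto
  have "sum_list (psi_step f M) = sum_list (M[l - 1 := M ! (l - 1) + f S]) + (M ! l - 1) - M[l - 1 := M ! (l - 1) + f S] ! l"
    unfolding psi_step_def Let_def l_def[symmetric] S_def[symmetric]
    by (rule sum_list_update) (use l1 in simp)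
  also have "\<dots> = S + f S - (M ! l - (M ! l - 1))"
    using l1 F \<open>M ! l \<le> S\<close> \<open>f S \<ge> S\<close> by (simp add: sum_list_update S_def l_def)
  also have "\<dots> = S + f S - 1" using F l_def by simp
  finally show ?thesis unfolding S_def .
qed

lemma psi_ge_sum:
  assumes "growth_function f" "length M \<ge> 1"
  shows "sum_list M \<le> psi f M"
  using assms
proof (induction f M rule: psi.induct)
  case (1 f' M)
  show ?case
  proof (cases "terminal M")
    case True
    have "sum_list M = (\<Sum>i = 0..<length M. M ! i)" by (simp add: sum_list_sum_nth)
    also have "\<dots> = (\<Sum>i\<in>{0}. M ! i)"
      by (rule sum.mono_neutral_right) (use True 1(3) in \<open>auto simp: terminal_def\<close>)
    finally show ?thesis using True by (simp add: psi_term)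
  next
    case False
    have IH: "sum_list (psi_step f' M) \<le> psi f' (psi_step f' M)"
      using 1 False unfolding terminal_def by simp
    have a: "0 < sum_list M" using fp_props[OF False] elem_le_sum_list[of "first_pos M" M] by linarith
    have b: "sum_list M \<le> f' (sum_list M)" using 1(2) unfolding growth_function_def by auto
    have "sum_list M \<le> sum_list (psi_step f' M)"
      using step_sum[OF 1(2) False] a b by linarith
    then show ?thesis using IH psi_nterm[OF False] by simp
  qed
qed

lemma step_invlex:
  assumes g: "growth_function f" and len: "length N = length M"
    and s: "sum_list N \<le> sum_list M" and nN: "\<not> terminal N" and nM: "\<not> terminal M"
    and j: "j < length M" "N ! j < M ! j" "\<forall>k. j < k \<and> k < length M \<longrightarrow> N ! k = M ! k"
  shows "invlex_less (psi_step f N) (psi_step f M)"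
proof -
  define lN where "lN = first_pos N"
  define lM where "lM = first_pos M"
  define sN where "sN = sum_list N"
  define sM where "sM = sum_list M"
  note FN = fp_props[OF nN, folded lN_def]
  note FM = fp_props[OF nM, folded lM_def]
  have fle: "f sN \<le> f sM" using g s unfolding growth_function_def mono_def sN_def sM_def by auto
  have sfM: "sM \<le> f sM" using g unfolding growth_function_def by auto
  have N': "\<And>i. i < length M \<Longrightarrow> psi_step f N ! i = (if i = lN - 1 then N ! (lN - 1) + f sN
     else if i = lN then N ! lN - 1 else N ! i)"
    using step_nth[OF nN] len unfolding lN_def sN_def by simp
  have M': "\<And>i. i < length M \<Longrightarrow> psi_step f M ! i = (if i = lM - 1 then M ! (lM - 1) + f sM
     else if i = lM then M ! lM - 1 else M ! i)"
    using step_nth[OF nM] unfolding lM_def sM_def by simp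
  have ex: "\<exists>j' < length M. psi_step f N ! j' < psi_step f M ! j' \<and>
     (\<forall>k. j' < k \<and> k < length M \<longrightarrow> psi_step f N ! k = psi_step f M ! k)"
  proof (cases "j = 0")
    case True
    have "lN = lM" unfolding lN_def lM_def first_pos_def
      by (intro arg_cong[where f=Least] ext) (use len j(3) True in auto)
    show ?thesis
    proof (cases "psi_step f N ! (lM - 1) < psi_step f M ! (lM - 1)")
      case True
      show ?thesis
        by (rule exI[of _ "lM - 1"]) (use True FM FN N' M' \<open>lN = lM\<close> j(3) \<open>j = 0\<close> in auto)
    next
      case False
      have "lM - 1 \<noteq> 0" using False N' M' FM \<open>lN = lM\<close> j \<open>j = 0\<close> fle by auto
      show ?thesis
        by (rule exI[of _ 0]) (use False FM FN N' M' \<open>lN = lM\<close> j \<open>j = 0\<close> \<open>lM - 1 \<noteq> 0\<close> fle in auto)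
    qed
  next
    case False
    have lMj: "lM \<le> j" unfolding lM_def by (rule fp_le) (use False j in auto)
    consider "j < lN" | "lN = j" | "lN < j" "lM < j" | "lN < j" "lM = j" using lMj by linarith
    then show ?thesis
    proof cases
      case 1
      show ?thesis
        by (rule exI[of _ lN]) (use 1 FM FN N' M' j lMj len in auto)
    next
      case 2
      show ?thesis
        by (rule exI[of _ j]) (use 2 FM FN N' M' j lMj len in auto)
    next
      case 3
      show ?thesis
        by (rule exI[of _ j]) (use 3 FM FN N' M' j lMj len in auto)
    next
      case 4
      show ?thesis
      proof (cases "N ! j < M ! j - 1")
        case True
        show ?thesis
          by (rule exI[of _ j]) (use 4 True FM FN N' M' j lMj len in auto)
      next
        case F2: False
        have eqj: "N ! j = M ! j - 1" using F2 j by linarith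
        have lt: "psi_step f N ! (j - 1) < psi_step f M ! (j - 1)"
        proof -
          have a: "psi_step f M ! (j - 1) = M ! (j - 1) + f sM" using M' 4 j by simp
          have b: "psi_step f N ! (j - 1) < sN \<or> psi_step f N ! (j - 1) = N ! (j - 1) - 1 \<and> 0 < N ! (j - 1)"
          proof (cases "N ! j > 0")
            case True
            have "N ! (j - 1) + N ! j \<le> sN" unfolding sN_def
              by (rule two_le_sum) (use False j len in auto)
            then show ?thesis using True N' 4 j False FN by auto
          next
            case F3: False
            show ?thesis
            proof (cases "lN = j - 1")
              case True
              then show ?thesis using N' 4 j FN by auto
            next
              case F4: False
              have "N ! lN + N ! (j - 1) \<le> sN" unfolding sN_def
                by (rule two_le_sum) (use F4 FN j len 4 in auto)
              then show ?thesis using N' 4 j FN F4 by auto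
            qed
          qed
          have "N ! (j - 1) \<le> sN" unfolding sN_def by (rule elem_le_sum_list) (use j len in auto)
          then show ?thesis using a b s sfM unfolding sN_def sM_def by (elim disjE conjE; arith)
        qed
        show ?thesis
        proof (rule exI[of _ "j - 1"], intro conjI allI impI)
          show "j - 1 < length M" using j by simp
          show "psi_step f N ! (j - 1) < psi_step f M ! (j - 1)" by (rule lt)
          fix k assume k: "j - 1 < k \<and> k < length M"
          show "psi_step f N ! k = psi_step f M ! k"
          proof (cases "k = j")
            case True
            then show ?thesis using N' M' 4 eqj FN j by auto
          next
            case False
            then have "j < k" using k 4 FM(1) by linarith
            then show ?thesis using N' M' 4 FN j k by auto
          qed
        qed
      qed
    qed
  qed
  then show ?thesis unfolding invlex_less_def using len by simp
qed

lemma main: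
  "growth_function f \<Longrightarrow> length M \<ge> 1 \<Longrightarrow> length N = length M \<Longrightarrow>
   sum_list N \<le> sum_list M \<Longrightarrow> invlex_le N M \<Longrightarrow> psi f N \<le> psi f M"
proof (induction f M arbitrary: N rule: psi.induct)
  case (1 f M)
  show ?case
  proof (cases "N = M")
    case True
    then show ?thesis by simp
  next
    case False
    then obtain j where j: "j < length M" "N ! j < M ! j" "\<forall>k. j < k \<and> k < length M \<longrightarrow> N ! k = M ! k"
      using 1(6) unfolding invlex_le_def invlex_less_def by auto
    show ?thesis
    proof (cases "terminal N")
      case True
      have "psi f N = N ! 0" using True by (rule psi_term)
      also have "\<dots> \<le> sum_list N" by (rule elem_le_sum_list) (use 1 in auto)
      also have "\<dots> \<le> sum_list M" by (rule 1(5))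
      also have "\<dots> \<le> psi f M" by (rule psi_ge_sum) (use 1 in auto)
      finally show ?thesis .
    next
      case nN: False
      have nM: "\<not> terminal M"
      proof
        assume tM: "terminal M"
        show False
        proof (cases "j = 0")
          case True
          then have "terminal N" using tM j 1(4) unfolding terminal_def by auto
          then show False using nN by simp
        next
          case False
          then show False using tM j unfolding terminal_def by auto
        qed
      qed
      have ms: "sum_list N + f (sum_list N) - 1 \<le> sum_list M + f (sum_list M) - 1"
        using 1(2,5) unfolding growth_function_def mono_def by (meson add_le_mono diff_le_mono)
      have IH: "psi f (psi_step f N) \<le> psi f (psi_step f M)"
      proof (rule 1(1))
        show "\<not> (\<forall>i. 1 \<le> i \<and> i < length M \<longrightarrow> M ! i = 0)" using nM unfolding terminal_def by simp
        show "growth_function f" by (rule 1(2))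
        show "1 \<le> length (psi_step f M)" using 1(3) by simp
        show "length (psi_step f N) = length (psi_step f M)" using 1(4) by simp
        show "sum_list (psi_step f N) \<le> sum_list (psi_step f M)"
          using ms step_sum[OF 1(2) nN] step_sum[OF 1(2) nM] by simp
        show "invlex_le (psi_step f N) (psi_step f M)"
          unfolding invlex_le_def using step_invlex[OF 1(2) 1(4) 1(5) nN nM j] by simp
      qed
      then show ?thesis using psi_nterm[OF nN] psi_nterm[OF nM] by simp
    qed
  qed
qed

theorem proposition3p13:
  fixes f :: "nat \<Rightarrow> nat" and d :: nat and N M :: "nat list"
  assumes "growth_function f"
    and "d \<ge> 1"
    and "length N = d" and "length M = d"
    and "sum_list N \<le> sum_list M"
    and "invlex_le N M"
  shows "psi f N \<le> psi f M"
  using main[OF assms(1) _ _ assms(5,6)] assms(2-4) by simp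

end
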